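(* Let $n\geq 1$, $m=\frac{n^2+n}{2}$, and let $z:\mathbb{R}^n\to\mathbb{R}^m$ be the map $z(x)=\begin{bmatrix}x_1^2 & x_1x_2 & \cdots & x_1x_n & x_2^2 & x_2x_3 & \cdots & x_n^2\end{bmatrix}^\top$ listing all quadratic monomials of $x$. Let $E=E^\top\in\mathbb{R}^{n\times n}$ be positive definite, $\alpha>0$, and $\mathcal{E}_\alpha=\{x : x^\top E x\leq\alpha^2\}$. Let $c_1,c_2\in\mathbb{R}^n$ be two nonzero, linearly independent vectors, and define $\phi(x)=x^\top Q x$ with $Q=\frac12(c_1c_2^\top+c_2c_1^\top)$. Then there exists $b\in\mathbb{R}^m$ such that $\phi(x)=b^\top z(x)$ for all $x$. Moreover, for $W$ equal to either $(c_2^\top E^{-1}c_2)\,c_1c_1^\top$ or $(c_1^\top E^{-1}c_1)\,c_2c_2^\top$, we have $$\begin{bmatrix} x\\ w\end{bmatrix}^\top\begin{bmatrix}\alpha^2 W & 0\\ 0 & -bb^\top\end{bmatrix}\begin{bmatrix} x\\ w\end{bmatrix}\geq 0\quad\text{for all } x\in\mathcal{E}_\alpha,\ w=z(x).$$ *)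

theory Defs
  imports "HOL-Analysis.Analysis"
begin

text \<open>Index set of the quadratic monomials x_i x_j with i \<le> j (m = (n^2+n)/2 elements).
  A vector in R^m is represented as a function on this index set.\<close>
definition monomial_index :: "('n::{finite,linorder} \<times> 'n) set" where
  "monomial_index = {(i, j). i \<le> j}"

definition zmap :: "real ^ ('n::{finite,linorder}) \<Rightarrow> ('n \<times> 'n \<Rightarrow> real)" where
  "zmap x = (\<lambda>(i, j). x $ i * x $ j)"

definition mdot :: "('n::{finite,linorder} \<times> 'n \<Rightarrow> real) \<Rightarrow> ('n \<times> 'n \<Rightarrow> real) \<Rightarrow> real" where
  "mdot b w = (\<Sum>p\<in>monomial_index. b p * w p)"

definition outer :: "real ^ 'n \<Rightarrow> real ^ 'n \<Rightarrow> real ^ 'n ^ 'n" where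
  "outer u v = (\<chi> i j. u $ i * v $ j)"

definition pos_def :: "real ^ 'n ^ 'n \<Rightarrow> bool" where
  "pos_def E \<longleftrightarrow> transpose E = E \<and> (\<forall>x. x \<noteq> 0 \<longrightarrow> x \<bullet> (E *v x) > 0)"

end

theory Submission
  imports Defs
begin

lemma E_sym_dot:
  fixes E :: "real ^ 'n ^ 'n"
  assumes "transpose E = E"
  shows "u \<bullet> (E *v v) = (E *v u) \<bullet> v"
proof -
  have "(u v* E) \<bullet> v = u \<bullet> (E *v v)" by (rule dot_lmul_matrix)
  moreover have "u v* E = E *v u"
    by (metis assms transpose_matrix_vector)
  ultimately show ?thesis by simp
qed

lemma E_inv_right:
  fixes E :: "real ^ 'n ^ 'n"
  assumes "pos_def E"
  shows "E *v (matrix_inv E *v c) = c"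
proof -
  have "\<forall>x. E *v x = 0 \<longrightarrow> x = 0"
  proof (intro allI impI)
    fix x assume h: "E *v x = 0"
    show "x = 0"
    proof (rule ccontr)
      assume "x \<noteq> 0"
      then have "x \<bullet> (E *v x) > 0" using assms unfolding pos_def_def by blast
      then show False using h by simp
    qed
  qed
  then have "invertible E"
    using invertible_left_inverse matrix_left_invertible_ker by blast
  then have "E ** matrix_inv E = mat 1 \<and> matrix_inv E ** E = mat 1"
    unfolding invertible_def matrix_inv_def by (rule someI_ex)
  then show ?thesis
    by (simp add: matrix_vector_mul_assoc)
qed

lemma gen_CS:
  fixes E :: "real ^ 'n ^ 'n"
  assumes pd: "pos_def E"
  shows "(c \<bullet> x)\<^sup>2 \<le> (c \<bullet> (matrix_inv E *v c)) * (x \<bullet> (E *v x))"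
proof -
  define y where "y = matrix_inv E *v c"
  have sym: "transpose E = E" using pd unfolding pos_def_def by blast
  have psd: "\<And>v. v \<bullet> (E *v v) \<ge> 0"
    using pd unfolding pos_def_def
    by (metis inner_zero_left less_eq_real_def matrix_vector_mult_0_right)
  have Ey: "E *v y = c" unfolding y_def by (rule E_inv_right[OF pd])
  have cx: "c \<bullet> x = y \<bullet> (E *v x)"
    using E_sym_dot[OF sym, of y x] Ey by simp
  have cy: "c \<bullet> y = y \<bullet> (E *v y)"
    using Ey by (simp add: inner_commute)
  define a where "a = y \<bullet> (E *v y)"
  define p where "p = y \<bullet> (E *v x)"
  define q where "q = x \<bullet> (E *v x)"
  have yx: "x \<bullet> (E *v y) = p"
    unfolding p_def using E_sym_dot[OF sym, of x y] E_sym_dot[OF sym, of y x]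
    by (simp add: inner_commute)
  have quad: "\<And>t. q - 2 * t * p + t\<^sup>2 * a \<ge> 0"
  proof -
    fix t :: real
    have "(x - t *\<^sub>R y) \<bullet> (E *v (x - t *\<^sub>R y)) = q - 2 * t * p + t\<^sup>2 * a"
      unfolding q_def p_def a_def using yx[unfolded p_def]
      by (simp add: matrix_vector_mult_diff_distrib matrix_vector_mult_scaleR
          inner_diff_left inner_diff_right algebra_simps power2_eq_square)
    then show "q - 2 * t * p + t\<^sup>2 * a \<ge> 0" using psd by metis
  qed
  have a0: "a \<ge> 0" unfolding a_def by (rule psd)
  have "p\<^sup>2 \<le> a * q"
  proof (cases "a = 0")
    case True
    have "p = 0"
    proof (rule ccontr)
      assume "p \<noteq> 0"
      have "q - 2 * ((q + 1) / (2 * p)) * p + ((q + 1) / (2 * p))\<^sup>2 * a \<ge> 0" by (rule quad)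
      then show False using True \<open>p \<noteq> 0\<close> by (simp add: field_simps)
    qed
    then show ?thesis using True by simp
  next
    case False
    then have ap: "a > 0" using a0 by simp
    have "q - 2 * (p / a) * p + (p / a)\<^sup>2 * a \<ge> 0" by (rule quad)
    then have "q - p\<^sup>2 / a \<ge> 0" using ap by (simp add: field_simps power2_eq_square)
    then show ?thesis using ap by (simp add: field_simps)
  qed
  then show ?thesis using cx cy unfolding y_def a_def p_def q_def by simp
qed


lemma quad_form:
  fixes c1 c2 x :: "real ^ 'n"
  shows "x \<bullet> (((1/2) *\<^sub>R (outer c1 c2 + outer c2 c1)) *v x) = (c1 \<bullet> x) * (c2 \<bullet> x)"
proof -
  have "x \<bullet> (((1/2) *\<^sub>R (outer c1 c2 + outer c2 c1)) *v x)
     = (\<Sum>i\<in>UNIV. \<Sum>j\<in>UNIV. x $ i * ((1/2) * (c1 $ i * c2 $ j + c2 $ i * c1 $ j) * x $ j))"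
    by (simp add: inner_vec_def matrix_vector_mult_def outer_def sum_distrib_left)
  also have "\<dots> = (1/2) * (\<Sum>i\<in>UNIV. \<Sum>j\<in>UNIV. c1 $ i * x $ i * (c2 $ j * x $ j))
       + (1/2) * (\<Sum>i\<in>UNIV. \<Sum>j\<in>UNIV. c2 $ i * x $ i * (c1 $ j * x $ j))"
    by (simp add: sum_distrib_left sum.distrib[symmetric] algebra_simps)
  also have "(\<Sum>i\<in>UNIV. \<Sum>j\<in>UNIV. c2 $ i * x $ i * (c1 $ j * x $ j))
       = (\<Sum>i\<in>UNIV. \<Sum>j\<in>UNIV. c1 $ i * x $ i * (c2 $ j * x $ j))"
    by (subst sum.swap) (simp add: algebra_simps)
  also have "(\<Sum>i\<in>UNIV. \<Sum>j\<in>UNIV. c1 $ i * x $ i * (c2 $ j * x $ j)) = (c1 \<bullet> x) * (c2 \<bullet> x)"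
    by (simp add: inner_vec_def sum_product)
  finally show ?thesis by simp
qed

lemma mdot_form:
  fixes c1 c2 x :: "real ^ ('n::{finite,linorder})"
  shows "mdot (\<lambda>(i,j). c1 $ i * c2 $ j + (if i < j then c1 $ j * c2 $ i else 0)) (zmap x)
     = (c1 \<bullet> x) * (c2 \<bullet> x)"
proof -
  define g where "g = (\<lambda>(i::'n, j::'n). c1 $ i * x $ i * (c2 $ j * x $ j))"
  define S where "S = (monomial_index :: ('n \<times> 'n) set)"
  define T where "T = {(i::'n, j::'n). j < i}"
  have lhs: "mdot (\<lambda>(i,j). c1 $ i * c2 $ j + (if i < j then c1 $ j * c2 $ i else 0)) (zmap x)
     = (\<Sum>p\<in>S. g p) + (\<Sum>p\<in>S. if fst p < snd p then g (prod.swap p) else 0)"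
    unfolding mdot_def zmap_def S_def g_def sum.distrib[symmetric]
    by (rule sum.cong) (auto simp: algebra_simps)
  have "(\<Sum>p\<in>S. if fst p < snd p then g (prod.swap p) else 0)
      = (\<Sum>p\<in>{p. fst p < snd p}. g (prod.swap p))"
    by (rule sum.mono_neutral_cong_right) (auto simp: S_def monomial_index_def)
  also have "\<dots> = (\<Sum>p\<in>T. g p)"
  proof -
    have "T = prod.swap ` {p. fst p < snd p}" unfolding T_def by force
    then show ?thesis by (simp add: sum.reindex)
  qed
  finally have e2: "(\<Sum>p\<in>S. if fst p < snd p then g (prod.swap p) else 0) = (\<Sum>p\<in>T. g p)" .
  have "(\<Sum>p\<in>S. g p) + (\<Sum>p\<in>T. g p) = (\<Sum>p\<in>S \<union> T. g p)"
    by (rule sum.union_disjoint[symmetric]) (auto simp: S_def T_def monomial_index_def)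
  also have "S \<union> T = UNIV" by (auto simp: S_def T_def monomial_index_def)
  also have "(\<Sum>p\<in>UNIV. g p) = (\<Sum>i\<in>UNIV. \<Sum>j\<in>UNIV. g (i, j))"
    by (simp add: sum.cartesian_product UNIV_Times_UNIV[symmetric] del: UNIV_Times_UNIV)
  also have "\<dots> = (c1 \<bullet> x) * (c2 \<bullet> x)"
    by (simp add: g_def inner_vec_def sum_product)
  finally show ?thesis using lhs e2 by simp
qed


lemma outer_form:
  fixes c x :: "real ^ 'n"
  shows "x \<bullet> ((s *\<^sub>R outer c c) *v x) = s * (c \<bullet> x)\<^sup>2"
proof -
  have "x \<bullet> ((s *\<^sub>R outer c c) *v x) = s * (\<Sum>i\<in>UNIV. \<Sum>j\<in>UNIV. c $ i * x $ i * (c $ j * x $ j))"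
    by (simp add: inner_vec_def matrix_vector_mult_def outer_def sum_distrib_left algebra_simps)
  also have "\<dots> = s * (c \<bullet> x)\<^sup>2"
    by (simp add: inner_vec_def sum_product power2_eq_square)
  finally show ?thesis .
qed

lemma key_ineq:
  fixes E :: "real ^ 'n ^ 'n"
  assumes pd: "pos_def E" and xE: "x \<bullet> (E *v x) \<le> \<alpha>\<^sup>2"
  shows "\<alpha>\<^sup>2 * ((c \<bullet> (matrix_inv E *v c)) * (d \<bullet> x)\<^sup>2) - ((d \<bullet> x) * (c \<bullet> x))\<^sup>2 \<ge> 0"
proof -
  have cs: "(c \<bullet> x)\<^sup>2 \<le> (c \<bullet> (matrix_inv E *v c)) * (x \<bullet> (E *v x))" by (rule gen_CS[OF pd])
  have s0: "c \<bullet> (matrix_inv E *v c) \<ge> 0"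
  proof -
    have "c \<bullet> (matrix_inv E *v c) = (matrix_inv E *v c) \<bullet> (E *v (matrix_inv E *v c))"
      by (simp add: E_inv_right[OF pd] inner_commute)
    also have "\<dots> \<ge> 0" using pd unfolding pos_def_def
      by (metis inner_zero_left less_eq_real_def matrix_vector_mult_0_right)
    finally show ?thesis .
  qed
  have "(c \<bullet> x)\<^sup>2 \<le> (c \<bullet> (matrix_inv E *v c)) * \<alpha>\<^sup>2"
    using cs mult_left_mono[OF xE s0] by linarith
  then have "(d \<bullet> x)\<^sup>2 * (c \<bullet> x)\<^sup>2 \<le> (d \<bullet> x)\<^sup>2 * ((c \<bullet> (matrix_inv E *v c)) * \<alpha>\<^sup>2)"
    by (rule mult_left_mono) simp
  then show ?thesis by (simp add: power_mult_distrib algebra_simps)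
qed

theorem theorem2:
  fixes E :: "real ^ ('n::{finite,linorder}) ^ ('n::{finite,linorder})"
    and c1 c2 :: "real ^ ('n::{finite,linorder})"
    and \<alpha> :: real
  assumes E_pd: "pos_def E"
    and alpha_pos: "\<alpha> > 0"
    and c1_nz: "c1 \<noteq> 0" and c2_nz: "c2 \<noteq> 0"
    and lin_indep: "\<forall>a b :: real. a *\<^sub>R c1 + b *\<^sub>R c2 = 0 \<longrightarrow> a = 0 \<and> b = 0"
  shows "\<exists>b :: ('n::{finite,linorder}) \<times> ('n::{finite,linorder}) \<Rightarrow> real.
           (\<forall>x :: real ^ ('n::{finite,linorder}).
              x \<bullet> (((1/2) *\<^sub>R (outer c1 c2 + outer c2 c1)) *v x) = mdot b (zmap x))
         \<and> (\<forall>W \<in> { (c2 \<bullet> (matrix_inv E *v c2)) *\<^sub>R outer c1 c1,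
                    (c1 \<bullet> (matrix_inv E *v c1)) *\<^sub>R outer c2 c2 }.
              \<forall>x :: real ^ ('n::{finite,linorder}). \<forall>w. x \<bullet> (E *v x) \<le> \<alpha>\<^sup>2 \<longrightarrow> w = zmap x \<longrightarrow>
                \<alpha>\<^sup>2 * (x \<bullet> (W *v x)) - (mdot b w)\<^sup>2 \<ge> 0)"
  proof (intro exI conjI)
  let ?b = "(\<lambda>(i,j). c1 $ i * c2 $ j + (if i < j then c1 $ j * c2 $ i else 0))"
  show "\<forall>x :: real ^ ('n::{finite,linorder}). x \<bullet> (((1/2) *\<^sub>R (outer c1 c2 + outer c2 c1)) *v x) = mdot ?b (zmap x)"
    by (simp only: quad_form mdot_form simp_thms)
  show "\<forall>W \<in> { (c2 \<bullet> (matrix_inv E *v c2)) *\<^sub>R outer c1 c1,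
                    (c1 \<bullet> (matrix_inv E *v c1)) *\<^sub>R outer c2 c2 }.
              \<forall>x :: real ^ ('n::{finite,linorder}). \<forall>w. x \<bullet> (E *v x) \<le> \<alpha>\<^sup>2 \<longrightarrow> w = zmap x \<longrightarrow>
                \<alpha>\<^sup>2 * (x \<bullet> (W *v x)) - (mdot ?b w)\<^sup>2 \<ge> 0"
  proof (intro ballI allI impI)
    fix W x w
    assume W: "W \<in> { (c2 \<bullet> (matrix_inv E *v c2)) *\<^sub>R outer c1 c1,
                    (c1 \<bullet> (matrix_inv E *v c1)) *\<^sub>R outer c2 c2 }"
      and xE: "x \<bullet> (E *v x) \<le> \<alpha>\<^sup>2" and w: "w = zmap x"
    have m: "mdot ?b w = (c1 \<bullet> x) * (c2 \<bullet> x)" unfolding w by (rule mdot_form)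
    from W show "\<alpha>\<^sup>2 * (x \<bullet> (W *v x)) - (mdot ?b w)\<^sup>2 \<ge> 0"
    proof
      assume "W = (c2 \<bullet> (matrix_inv E *v c2)) *\<^sub>R outer c1 c1"
      then show ?thesis using key_ineq[OF E_pd xE, of c2 c1] unfolding m outer_form by (simp only: outer_form)
    next
      assume "W \<in> {(c1 \<bullet> (matrix_inv E *v c1)) *\<^sub>R outer c2 c2}"
      then have W2: "W = (c1 \<bullet> (matrix_inv E *v c1)) *\<^sub>R outer c2 c2" by simp
      show ?thesis using key_ineq[OF E_pd xE, of c1 c2] unfolding W2 m outer_form by (simp only: mult.commute)
    qed
  qed
qed

end
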